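(* Consider the plant, observer and controller of the context with $v(t)=0$ for all $t\ge0$, and the detector monitoring signal $g$, and suppose Assumption 1 holds. Suppose a replay attack is launched at time $T$ and $\sigma\le T$, and suppose the attacked observer (for $t\in[T,2T)$) is incrementally input-to-state stable ($\delta$ISS) with respect to the input $y^a$ and state $\hat x$. Then there exists a class-$\mathcal{KL}$ function $\overline\beta$ such that, denoting by $\tilde y(s)$, $s\in[0,T)$, the (unattacked) innovation $y(s)-\hat y(s)$, $$g(t)\le\frac1\sigma\int_{t-\sigma}^{T}\|\tilde y(s)\|^2ds+\frac1\sigma\int_T^t\|\tilde y(s-T)\|^2ds+\overline\beta(\|\hat x(T)-\hat x(0)\|,t),\quad t\in[T,T+\sigma),$$ $$g(t)\le\frac1\sigma\int_{t-\sigma}^{t}\|\tilde y(s-T)\|^2ds+\overline\beta(\|\hat x(T)-\hat x(0)\|,t),\quad t\in[T+\sigma,2T).$$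
   Context: Plant: $\dot x=f(x)+Bu+\omega$, $y=Cx+Du+\nu$, $x\in\mathbb{R}^n$, $u\in\mathbb{R}^m$, $y\in\mathbb{R}^p$, $f:\mathbb{R}^n\to\mathbb{R}^n$ continuously differentiable; noises $\omega,\nu$ Lebesgue integrable with $\|\omega\|_\infty\le\bar\omega$, $\|\nu\|_\infty\le\bar\nu$ ($\bar\omega,\bar\nu>0$). Observer: $\dot{\hat x}=f(\hat x)+Bu+L(y-\hat y)$, $\hat y=C\hat x+Du$, $L\in\mathbb{R}^{n\times p}$. Controller: $u=\kappa(\hat x)+v$, with $\kappa$ Lipschitz: $\|\kappa(x_1)-\kappa(x_2)\|\le l_\kappa\|x_1-x_2\|$. Observation error $\tilde x=x-\hat x$ obeys the dynamics obtained by subtracting observer from plant, with output (innovation) $\tilde y=y-\hat y=C\tilde x+\nu$; the closed-loop plant is $\dot x=f(x)+B(\kappa(x-\tilde x)+v)+\omega$. Assumption 1: the error dynamics are input-to-state stable (ISS) with respect to inputs $(\nu,\omega)$ uniformly in $x$, and the closed-loop plant is $\delta$ISS with respect to inputs $(\tilde x,v,\omega)$. (ISS: $\|X(t,x_0,u)\|\le\beta(\|x_0\|,t)+\alpha(\|u\|_\infty)$; $\delta$ISS: $\|X(t,x_1,u_1)-X(t,x_2,u_2)\|\le\beta(\|x_1-x_2\|,t)+\alpha(\|u_1-u_2\|_\infty)$, for some $\beta\in\mathcal{KL}$, $\alpha\in\mathcal{K}$.) Detector: monitoring signal $g(t)=\frac1\sigma\int_{t-\sigma}^t\|\tilde y(s)\|^2ds$,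 $\sigma>0$, where $\tilde y$ is the received measurement minus $\hat y$; alarm if $g(t)>\vartheta$. Replay attack: on $[0,T)$ the adversary records $y$; on $[T,2T)$ the observer receives $y^a(t)=y(t-T)$ instead of the true measurement, so the attacked observer is $\dot{\hat x}=f(\hat x)+B(\kappa(\hat x)+v)-L[C\hat x+D(\kappa(\hat x)+v)]+Ly^a$, $\hat y=C\hat x+D(\kappa(\hat x)+v)$, and the innovation used by the detector is $y^a(t)-\hat y(t)$. *)

theory Defs
  imports "HOL-Analysis.Analysis"
begin

definition class_K :: "(real \<Rightarrow> real) \<Rightarrow> bool" where
  "class_K \<alpha> \<longleftrightarrow> \<alpha> 0 = 0 \<and> continuous_on {0..} \<alpha> \<and> strict_mono_on {0..} \<alpha>"

definition class_KL :: "(real \<Rightarrow> real \<Rightarrow> real) \<Rightarrow> bool" where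
  "class_KL \<beta> \<longleftrightarrow>
     (\<forall>t\<ge>0. class_K (\<lambda>r. \<beta> r t)) \<and>
     (\<forall>r\<ge>0. (\<forall>s t. 0 \<le> s \<longrightarrow> s \<le> t \<longrightarrow> \<beta> r t \<le> \<beta> r s) \<and> ((\<beta> r) \<longlongrightarrow> 0) at_top)"

text \<open>Caratheodory solution on [0,tau] of the time-varying ODE  X' = G t X,
  written in integral form (Lebesgue integral).\<close>
definition solves_on :: "(real \<Rightarrow> 's::euclidean_space \<Rightarrow> 's) \<Rightarrow> (real \<Rightarrow> 's) \<Rightarrow> real \<Rightarrow> bool" where
  "solves_on G X \<tau> \<longleftrightarrow>
     (\<forall>t\<in>{0..\<tau>}. (\<lambda>s. G s (X s)) absolutely_integrable_on {0..t} \<and>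
                   X t = X 0 + integral {0..t} (\<lambda>s. G s (X s)))"

definition supn :: "(real \<Rightarrow> 'a::real_normed_vector) \<Rightarrow> real \<Rightarrow> real" where
  "supn u t = (SUP s\<in>{0..t}. norm (u s))"

definition ISS :: "('s::euclidean_space \<Rightarrow> 'u::real_normed_vector \<Rightarrow> 's) \<Rightarrow> bool" where
  "ISS F \<longleftrightarrow> (\<exists>\<beta> \<alpha>. class_KL \<beta> \<and> class_K \<alpha> \<and>
     (\<forall>\<tau>\<ge>0. \<forall>X u. bounded (u ` {0..\<tau>}) \<longrightarrow> solves_on (\<lambda>s z. F z (u s)) X \<tau> \<longrightarrow>
        (\<forall>t\<in>{0..\<tau>}. norm (X t) \<le> \<beta> (norm (X 0)) t + \<alpha> (supn u t))))"

definition ISS_unif :: "('z \<Rightarrow> 's::euclidean_space \<Rightarrow> 'u::real_normed_vector \<Rightarrow> 's) \<Rightarrow> bool" where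
  "ISS_unif F \<longleftrightarrow> (\<exists>\<beta> \<alpha>. class_KL \<beta> \<and> class_K \<alpha> \<and>
     (\<forall>\<tau>\<ge>0. \<forall>X z u. bounded (u ` {0..\<tau>}) \<longrightarrow> solves_on (\<lambda>s e. F (z s) e (u s)) X \<tau> \<longrightarrow>
        (\<forall>t\<in>{0..\<tau>}. norm (X t) \<le> \<beta> (norm (X 0)) t + \<alpha> (supn u t))))"

definition dISS :: "('s::euclidean_space \<Rightarrow> 'u::real_normed_vector \<Rightarrow> 's) \<Rightarrow> bool" where
  "dISS F \<longleftrightarrow> (\<exists>\<beta> \<alpha>. class_KL \<beta> \<and> class_K \<alpha> \<and>
     (\<forall>\<tau>\<ge>0. \<forall>X1 X2 u1 u2. bounded (u1 ` {0..\<tau>}) \<longrightarrow> bounded (u2 ` {0..\<tau>}) \<longrightarrow>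
        solves_on (\<lambda>s z. F z (u1 s)) X1 \<tau> \<longrightarrow> solves_on (\<lambda>s z. F z (u2 s)) X2 \<tau> \<longrightarrow>
        (\<forall>t\<in>{0..\<tau>}. norm (X1 t - X2 t) \<le> \<beta> (norm (X1 0 - X2 0)) t + \<alpha> (supn (\<lambda>s. u1 s - u2 s) t))))"

definition monitor :: "real \<Rightarrow> (real \<Rightarrow> 'a::real_normed_vector) \<Rightarrow> real \<Rightarrow> real" where
  "monitor \<sigma> r t = (1/\<sigma>) * integral {t-\<sigma>..t} (\<lambda>s. (norm (r s))\<^sup>2)"

end

theory Submission imports Defs "HOL-Real_Asymp.Real_Asymp" begin

lemma KL_lin: assumes "c > 0" shows "class_KL (\<lambda>r t. c * r * exp (-t))"
proof -
  have A: "class_K (\<lambda>r. c * r * exp (- t))" for t :: real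
    unfolding class_K_def
  proof (intro conjI)
    show "c * 0 * exp (- t) = 0" by simp
    show "continuous_on {0..} (\<lambda>r. c * r * exp (- t))" by (intro continuous_intros)
    show "strict_mono_on {0..} (\<lambda>r. c * r * exp (- t))"
      by (rule strict_mono_onI) (use assms in auto)
  qed
  have B: "c * r * exp (- t) \<le> c * r * exp (- s)" if "0 \<le> r" "s \<le> t" for r s t :: real
    using assms that by (auto intro!: mult_left_mono)
  have C: "((\<lambda>t. c * r * exp (- t)) \<longlongrightarrow> 0) at_top" for r :: real by real_asymp
  show ?thesis unfolding class_KL_def using A B C by blast
qed

lemma shift_integrable:
  fixes g :: "real \<Rightarrow> 'a::banach"
  assumes "g integrable_on {a-c..b-c}"
  shows "(\<lambda>s. g (s - c)) integrable_on {a..b}"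
proof -
  from assms obtain I where "(g has_integral I) {a + (-c) .. b + (-c)}" by (auto simp: integrable_on_def)
  then have "((g \<circ> (+) (-c)) has_integral I) {a..b}" using has_integral_shift_Icc_real by blast
  then show ?thesis by (auto simp: integrable_on_def o_def)
qed

lemma shift_abs:
  fixes g :: "real \<Rightarrow> 'a::euclidean_space"
  assumes "g absolutely_integrable_on {a+c..b+c}"
  shows "(\<lambda>s. g (c + s)) absolutely_integrable_on {a..b}"
    and "integral {a..b} (\<lambda>s. g (c+s)) = integral {a+c..b+c} g"
proof -
  have i1: "g integrable_on {a+c..b+c}" and i2: "(\<lambda>x. norm (g x)) integrable_on {a+c..b+c}"
    using assms absolutely_integrable_on_def by blast+
  have "(\<lambda>s. g (c + s)) integrable_on {a..b}"
    using i1 shift_integrable[of g a "-c" b] by (simp add: add.commute)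
  moreover have "(\<lambda>s. norm (g (c + s))) integrable_on {a..b}"
    using i2 shift_integrable[of "\<lambda>x. norm (g x)" a "-c" b] by (simp add: add.commute)
  ultimately show "(\<lambda>s. g (c + s)) absolutely_integrable_on {a..b}"
    using absolutely_integrable_on_def by blast
  show "integral {a..b} (\<lambda>s. g (c+s)) = integral {a+c..b+c} g"
    using integral_shift_Icc_real[of a b g c] by (simp add: o_def)
qed

lemma mv_cont[continuous_intros]:
  fixes A :: "real^'a^'b" and g :: "real \<Rightarrow> real^'a"
  assumes "continuous_on S g"
  shows "continuous_on S (\<lambda>t. A *v g t)"
  using linear_continuous_on_compose[OF assms matrix_vector_mul_linear] .

theorem proposition3:
  fixes f :: "real^'n \<Rightarrow> real^'n"
    and f' :: "real^'n \<Rightarrow> ((real^'n) \<Rightarrow>\<^sub>L (real^'n))"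
    and B :: "real^'m^'n" and C :: "real^'n^'p" and D :: "real^'m^'p" and L :: "real^'p^'n"
    and \<kappa> :: "real^'n \<Rightarrow> real^'m" and l\<kappa> :: real
    and \<omega> :: "real \<Rightarrow> real^'n" and \<nu> :: "real \<Rightarrow> real^'p" and \<omega>b \<nu>b :: real
    and T \<sigma> :: real
    and x xh :: "real \<Rightarrow> real^'n"
    and u :: "real \<Rightarrow> real^'m" and y yh ym :: "real \<Rightarrow> real^'p"
  assumes f_C1: "\<forall>z. (f has_derivative blinfun_apply (f' z)) (at z)" "continuous_on UNIV f'"
    and \<kappa>_lip: "\<forall>a b. norm (\<kappa> a - \<kappa> b) \<le> l\<kappa> * norm (a - b)"
    and \<omega>_int: "\<forall>t\<ge>0. \<omega> absolutely_integrable_on {0..t}"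
    and \<nu>_int: "\<forall>t\<ge>0. \<nu> absolutely_integrable_on {0..t}"
    and noise_pos: "\<omega>b > 0" "\<nu>b > 0"
    and \<omega>_bd: "\<forall>t\<ge>0. norm (\<omega> t) \<le> \<omega>b"
    and \<nu>_bd: "\<forall>t\<ge>0. norm (\<nu> t) \<le> \<nu>b"
    \<comment> \<open>Assumption 1: error dynamics ISS w.r.t. (nu, omega) uniformly in x\<close>
    and ass1_err: "ISS_unif (\<lambda>(xs::real^'n) (e::real^'n) (w::(real^'p) \<times> (real^'n)).
                      f xs - f (xs - e) + snd w - L *v (C *v e + fst w))"
    \<comment> \<open>Assumption 1: closed-loop plant deltaISS w.r.t. (x tilde, v, omega)\<close>
    and ass1_plant: "dISS (\<lambda>(xs::real^'n) (w::(real^'n) \<times> (real^'m) \<times> (real^'n)).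
                      f xs + B *v (\<kappa> (xs - fst w) + fst (snd w)) + snd (snd w))"
    \<comment> \<open>attacked observer deltaISS w.r.t. input y^a and state xh\<close>
    and att_dISS: "dISS (\<lambda>(z::real^'n) (ya::real^'p).
                      f z + B *v \<kappa> z - L *v (C *v z + D *v \<kappa> z) + L *v ya)"
    and T_pos: "T > 0" and \<sigma>_pos: "\<sigma> > 0" and \<sigma>_le: "\<sigma> \<le> T"
    \<comment> \<open>controller with v = 0, plant output, observer output\<close>
    and u_def: "\<forall>t. u t = \<kappa> (xh t)"
    and y_def: "\<forall>t. y t = C *v x t + D *v u t + \<nu> t"
    and yh_def: "\<forall>t. yh t = C *v xh t + D *v u t"
    \<comment> \<open>measurement received by the observer: true one before T, replayed on [T,2T)\<close>
    and ym_def: "\<forall>t. ym t = (if t < T then y t else y (t - T))"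
    \<comment> \<open>plant trajectory on [0,2T)\<close>
    and plant: "\<forall>t\<in>{0..<2*T}. (\<lambda>s. f (x s) + B *v u s + \<omega> s) absolutely_integrable_on {0..t} \<and>
                  x t = x 0 + integral {0..t} (\<lambda>s. f (x s) + B *v u s + \<omega> s)"
    \<comment> \<open>observer trajectory driven by the received measurement on [0,2T)\<close>
    and observer: "\<forall>t\<in>{0..<2*T}. (\<lambda>s. f (xh s) + B *v u s + L *v (ym s - yh s)) absolutely_integrable_on {0..t} \<and>
                  xh t = xh 0 + integral {0..t} (\<lambda>s. f (xh s) + B *v u s + L *v (ym s - yh s))"
  shows "\<exists>\<beta>b. class_KL \<beta>b \<and>
    (\<forall>t\<in>{T..<T+\<sigma>}. monitor \<sigma> (\<lambda>s. ym s - yh s) t \<le>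
        (1/\<sigma>) * integral {t-\<sigma>..T} (\<lambda>s. (norm (y s - yh s))\<^sup>2)
      + (1/\<sigma>) * integral {T..t} (\<lambda>s. (norm (y (s-T) - yh (s-T)))\<^sup>2)
      + \<beta>b (norm (xh T - xh 0)) t) \<and>
    (\<forall>t\<in>{T+\<sigma>..<2*T}. monitor \<sigma> (\<lambda>s. ym s - yh s) t \<le>
        (1/\<sigma>) * integral {t-\<sigma>..t} (\<lambda>s. (norm (y (s-T) - yh (s-T)))\<^sup>2)
      + \<beta>b (norm (xh T - xh 0)) t)"
  proof -
  have fcont: "continuous_on UNIV f"
    using f_C1(1) by (meson continuous_at_imp_continuous_on has_derivative_continuous)
  have kcont: "continuous_on UNIV \<kappa>"
  proof -
    have "lipschitz_on \<bar>l\<kappa>\<bar> UNIV \<kappa>"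
      unfolding lipschitz_on_def dist_norm
    proof safe
      fix a b show "norm (\<kappa> a - \<kappa> b) \<le> \<bar>l\<kappa>\<bar> * norm (a - b)"
        using \<kappa>_lip[rule_format, of a b] by (smt (verit) abs_ge_self mult_right_mono norm_ge_zero)
    qed auto
    thus ?thesis by (rule lipschitz_on_continuous_on)
  qed
  have u_eq: "u = (\<lambda>t. \<kappa> (xh t))" using u_def by auto
  have yh_eq: "yh = (\<lambda>t. C *v xh t + D *v u t)" using yh_def by auto
  have y_eq: "y = (\<lambda>t. C *v x t + D *v u t + \<nu> t)" using y_def by auto
  define Fp where "Fp = (\<lambda>s. f (x s) + B *v u s + \<omega> s)"
  define Fo where "Fo = (\<lambda>s. f (xh s) + B *v u s + L *v (ym s - yh s))"
  have Fp_ai: "Fp absolutely_integrable_on {0..t}" and x_eq: "x t = x 0 + integral {0..t} Fp"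
    if "0 \<le> t" "t < 2*T" for t
  proof -
    have "t \<in> {0..<2*T}" using that by simp
    then have "Fp absolutely_integrable_on {0..t} \<and> x t = x 0 + integral {0..t} Fp"
      using plant unfolding Fp_def by blast
    then show "Fp absolutely_integrable_on {0..t}" "x t = x 0 + integral {0..t} Fp" by blast+
  qed
  have Fo_ai: "Fo absolutely_integrable_on {0..t}" and xh_eq: "xh t = xh 0 + integral {0..t} Fo"
    if "0 \<le> t" "t < 2*T" for t
  proof -
    have "t \<in> {0..<2*T}" using that by simp
    then have "Fo absolutely_integrable_on {0..t} \<and> xh t = xh 0 + integral {0..t} Fo"
      using observer unfolding Fo_def by blast
    then show "Fo absolutely_integrable_on {0..t}" "xh t = xh 0 + integral {0..t} Fo" by blast+
  qed
  have xcont: "continuous_on {0..b} x" if "b < 2*T" for b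
  proof (cases "0 \<le> b")
    case True
    have "Fp integrable_on {0..b}" using Fp_ai[OF True that] absolutely_integrable_on_def by blast
    then have "continuous_on {0..b} (\<lambda>t. x 0 + integral {0..t} Fp)"
      by (intro continuous_intros indefinite_integral_continuous_1)
    then show ?thesis
    proof (rule continuous_on_eq)
      fix t assume "t \<in> {0..b}"
      with that have "0 \<le> t" "t < 2*T" by auto
      then show "x 0 + integral {0..t} Fp = x t" using x_eq[of t] by simp
    qed
  next
    case False then show ?thesis by simp
  qed
  have xhcont: "continuous_on {0..b} xh" if "b < 2*T" for b
  proof (cases "0 \<le> b")
    case True
    have "Fo integrable_on {0..b}" using Fo_ai[OF True that] absolutely_integrable_on_def by blast
    then have "continuous_on {0..b} (\<lambda>t. xh 0 + integral {0..t} Fo)"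
      by (intro continuous_intros indefinite_integral_continuous_1)
    then show ?thesis
    proof (rule continuous_on_eq)
      fix t assume "t \<in> {0..b}"
      with that have "0 \<le> t" "t < 2*T" by auto
      then show "xh 0 + integral {0..t} Fo = xh t" using xh_eq[of t] by simp
    qed
  next
    case False then show ?thesis by simp
  qed
  have ucont: "continuous_on {0..b} u" if "b < 2*T" for b
    unfolding u_eq using continuous_on_compose2[OF kcont xhcont[OF that]] by auto
  have yhcont: "continuous_on {0..b} yh" if "b < 2*T" for b
    unfolding yh_eq using xhcont[OF that] ucont[OF that] by (intro continuous_intros)
  have yccont: "continuous_on {0..b} (\<lambda>t. C *v x t + D *v u t)" if "b < 2*T" for b
    using xcont[OF that] ucont[OF that] by (intro continuous_intros)
  have nu_int: "\<nu> integrable_on {a..b}" if "0 \<le> a" "b < 2*T" for a b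
  proof (cases "a \<le> b")
    case True
    have "\<nu> absolutely_integrable_on {0..b}" using \<nu>_int that True by auto
    then have "\<nu> integrable_on {0..b}" using absolutely_integrable_on_def by blast
    then show ?thesis by (rule integrable_on_subinterval) (use that in auto)
  qed (simp add: integrable_on_empty)
  have y_int: "y integrable_on {a..b}" if "0 \<le> a" "b < 2*T" for a b
  proof -
    have "(\<lambda>t. C *v x t + D *v u t) integrable_on {a..b}"
      by (rule integrable_continuous_interval, rule continuous_on_subset[OF yccont[OF that(2)]]) (use that in auto)
    then show ?thesis unfolding y_eq using nu_int[OF that] by (rule integrable_add)
  qed
  have yt_int: "(\<lambda>s. y s - yh s) integrable_on {a..b}" if "0 \<le> a" "b < 2*T" for a b
  proof -
    have "yh integrable_on {a..b}"
      by (rule integrable_continuous_interval, rule continuous_on_subset[OF yhcont[OF that(2)]]) (use that in auto)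
    then show ?thesis using y_int[OF that] by (intro integrable_diff)
  qed
  obtain Ky where Ky: "\<And>s. s\<in>{0..T} \<Longrightarrow> norm (C *v x s + D *v u s) \<le> Ky"
  proof -
    have "compact ((\<lambda>t. C *v x t + D *v u t) ` {0..T})"
      using yccont[of T] T_pos by (intro compact_continuous_image) auto
    then obtain K where "\<forall>z\<in>(\<lambda>t. C *v x t + D *v u t) ` {0..T}. norm z \<le> K"
      using compact_imp_bounded bounded_iff by metis
    then show ?thesis using that by blast
  qed
  have y_bd: "norm (y s) \<le> Ky + \<nu>b" if "s \<in> {0..T}" for s
  proof -
    have "norm (y s) \<le> norm (C *v x s + D *v u s) + norm (\<nu> s)"
      unfolding y_eq by (rule norm_triangle_ineq)
    then show ?thesis using Ky[OF that] \<nu>_bd that by force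
  qed
  obtain Ke where Ke: "\<And>s. s\<in>{0..T} \<Longrightarrow> norm (C *v x s + D *v u s - yh s) \<le> Ke"
  proof -
    have "compact ((\<lambda>t. C *v x t + D *v u t - yh t) ` {0..T})"
      using continuous_on_diff[OF yccont[of T] yhcont[of T]] T_pos by (intro compact_continuous_image) auto
    then obtain K where "\<forall>z\<in>(\<lambda>t. C *v x t + D *v u t - yh t) ` {0..T}. norm z \<le> K"
      using compact_imp_bounded bounded_iff by metis
    then show ?thesis using that by blast
  qed
  define M where "M = Ke + \<nu>b"
  have yt_bd: "norm (y s - yh s) \<le> M" if "s \<in> {0..T}" for s
  proof -
    have "norm (y s - yh s) \<le> norm (C *v x s + D *v u s - yh s) + norm (\<nu> s)"
      using norm_triangle_ineq[of "C *v x s + D *v u s - yh s" "\<nu> s"] unfolding y_eq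
      by (simp add: algebra_simps)
    then show ?thesis using Ke[OF that] \<nu>_bd that unfolding M_def by force
  qed
  have M0: "0 \<le> M" using yt_bd[of 0] T_pos by (meson atLeastAtMost_iff less_le norm_ge_zero order_trans order_refl)
  define Fa where "Fa = (\<lambda>(z::real^'n) (ya::real^'p).
                      f z + B *v \<kappa> z - L *v (C *v z + D *v \<kappa> z) + L *v ya)"
  have "dISS Fa" using att_dISS unfolding Fa_def .
  then obtain \<beta> \<alpha> where KL: "class_KL \<beta>" and K: "class_K \<alpha>" and dI: "\<forall>\<tau>\<ge>0. \<forall>X1 X2 u1 u2. bounded (u1 ` {0..\<tau>}) \<longrightarrow> bounded (u2 ` {0..\<tau>}) \<longrightarrow>
        solves_on (\<lambda>s z. Fa z (u1 s)) X1 \<tau> \<longrightarrow> solves_on (\<lambda>s z. Fa z (u2 s)) X2 \<tau> \<longrightarrow>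
        (\<forall>t\<in>{0..\<tau>}. norm (X1 t - X2 t) \<le> \<beta> (norm (X1 0 - X2 0)) t + \<alpha> (supn (\<lambda>s. u1 s - u2 s) t))"
    unfolding dISS_def by blast
  define r0 where "r0 = norm (xh T - xh 0)"
  have key: "norm (xh (T + s) - xh s) \<le> \<beta> r0 0" if s: "0 \<le> s" "s < T" for s
  proof -
    have bY: "bounded (y ` {0..s})"
      unfolding bounded_iff using y_bd s by (intro exI[of _ "Ky + \<nu>b"]) auto
    have sol2: "solves_on (\<lambda>r z. Fa z (y r)) xh s"
      unfolding solves_on_def
    proof
      fix t assume t: "t \<in> {0..s}"
      have eq: "Fo r = Fa (xh r) (y r)" if "r \<in> {0..t}" for r
        using that t s ym_def[rule_format, of r] unfolding Fo_def Fa_def yh_eq u_eq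
        by (simp add: matrix_vector_mult_diff_distrib)
      have "Fo absolutely_integrable_on {0..t}" using Fo_ai t s T_pos by auto
      moreover have "set_integrable lebesgue {0..t} Fo = set_integrable lebesgue {0..t} (\<lambda>r. Fa (xh r) (y r))"
        by (rule set_integrable_cong) (simp_all add: eq)
      ultimately have A: "(\<lambda>r. Fa (xh r) (y r)) absolutely_integrable_on {0..t}" by simp
      have B: "integral {0..t} Fo = integral {0..t} (\<lambda>r. Fa (xh r) (y r))"
        by (rule integral_cong) (simp add: eq)
      show "(\<lambda>r. Fa (xh r) (y r)) absolutely_integrable_on {0..t} \<and>
            xh t = xh 0 + integral {0..t} (\<lambda>r. Fa (xh r) (y r))"
        using A B xh_eq[of t] t s by auto
    qed
    have sol1: "solves_on (\<lambda>r z. Fa z (y r)) (\<lambda>r. xh (T + r)) s"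
      unfolding solves_on_def
    proof
      fix t assume t: "t \<in> {0..s}"
      have eq: "Fo (T + r) = Fa (xh (T + r)) (y r)" if "r \<in> {0..t}" for r
        using that t s ym_def[rule_format, of "T+r"] unfolding Fo_def Fa_def yh_eq u_eq
        by (simp add: matrix_vector_mult_diff_distrib)
      have ai: "Fo absolutely_integrable_on {0..T+t}" using Fo_ai t s T_pos by auto
      have "Fo absolutely_integrable_on {0+T..t+T}"
        by (rule set_integrable_subset[OF ai]) (use t T_pos in auto)
      note sh = shift_abs[OF this]
      have "set_integrable lebesgue {0..t} (\<lambda>r. Fo (T + r)) = set_integrable lebesgue {0..t} (\<lambda>r. Fa (xh (T + r)) (y r))"
        by (rule set_integrable_cong) (simp_all add: eq)
      then have A: "(\<lambda>r. Fa (xh (T + r)) (y r)) absolutely_integrable_on {0..t}" using sh(1) by simp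
      have B: "integral {0..t} (\<lambda>r. Fa (xh (T + r)) (y r)) = integral {T..T+t} Fo"
      proof -
        have "integral {0..t} (\<lambda>r. Fa (xh (T + r)) (y r)) = integral {0..t} (\<lambda>r. Fo (T + r))"
          by (rule integral_cong) (simp add: eq)
        also have "\<dots> = integral {0+T..t+T} Fo" by (rule sh(2))
        finally show ?thesis by (simp add: add.commute)
      qed
      have Foi: "Fo integrable_on {0..T+t}" using ai absolutely_integrable_on_def by blast
      have Cb: "integral {0..T} Fo + integral {T..T+t} Fo = integral {0..T+t} Fo"
        by (rule Henstock_Kurzweil_Integration.integral_combine[OF _ _ Foi]) (use t T_pos in auto)
      show "(\<lambda>r. Fa (xh (T + r)) (y r)) absolutely_integrable_on {0..t} \<and>
            xh (T + t) = xh (T + 0) + integral {0..t} (\<lambda>r. Fa (xh (T + r)) (y r))"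
        using A B Cb xh_eq[of "T+t"] xh_eq[of T] t s T_pos by auto
    qed
    have "\<forall>t\<in>{0..s}. norm (xh (T + t) - xh t) \<le> \<beta> (norm (xh (T + 0) - xh 0)) t + \<alpha> (supn (\<lambda>r. y r - y r) t)"
      using dI s bY sol1 sol2 by blast
    then have 1: "norm (xh (T + s) - xh s) \<le> \<beta> r0 s + \<alpha> (supn (\<lambda>r. y r - y r) s)"
      using s unfolding r0_def by auto
    have "supn (\<lambda>r. y r - y r) s = 0" unfolding supn_def using s by simp
    moreover have "\<alpha> 0 = 0" using K unfolding class_K_def by auto
    moreover have "\<beta> r0 s \<le> \<beta> r0 0" using KL s unfolding class_KL_def r0_def by auto
    ultimately show ?thesis using 1 by simp
  qed
  define b where "b = \<beta> r0 0"
  have b0: "0 \<le> b" using key[of 0] T_pos unfolding b_def by (meson norm_ge_zero order_trans order_refl)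
  have br0: "b = 0" if "r0 = 0" using KL that unfolding class_KL_def class_K_def b_def by auto
  obtain KC where KC: "\<And>v. norm (C *v v) \<le> norm v * KC" and KCp: "KC > 0"
    using bounded_linear.pos_bounded[OF matrix_vector_mul_bounded_linear[of C]] by blast
  obtain KD where KD: "\<And>v. norm (D *v v) \<le> norm v * KD" and KDp: "KD > 0"
    using bounded_linear.pos_bounded[OF matrix_vector_mul_bounded_linear[of D]] by blast
  define d where "d = KC * b + KD * \<bar>l\<kappa>\<bar> * b"
  have d0: "0 \<le> d" using b0 KCp KDp unfolding d_def by simp
  have dr0: "d = 0" if "r0 = 0" using br0[OF that] d_def by simp
  have ydiff: "norm (yh (T + s) - yh s) \<le> d" if s: "0 \<le> s" "s < T" for s
  proof -
    define Dx where "Dx = xh (T + s) - xh s"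
    define Dk where "Dk = \<kappa> (xh (T + s)) - \<kappa> (xh s)"
    have e: "yh (T + s) - yh s = C *v Dx + D *v Dk"
      unfolding yh_eq u_eq Dx_def Dk_def by (simp add: matrix_vector_mult_diff_distrib algebra_simps)
    have kD: "norm Dx \<le> b" using key[OF s] unfolding b_def Dx_def .
    have n1: "norm (C *v Dx) \<le> b * KC"
      using KC[of Dx] mult_right_mono[OF kD, of KC] KCp by linarith
    have n2: "norm Dk \<le> \<bar>l\<kappa>\<bar> * b"
    proof -
      have "norm Dk \<le> l\<kappa> * norm Dx" using \<kappa>_lip unfolding Dk_def Dx_def by blast
      also have "\<dots> \<le> \<bar>l\<kappa>\<bar> * norm Dx" by (intro mult_right_mono) auto
      also have "\<dots> \<le> \<bar>l\<kappa>\<bar> * b" by (intro mult_left_mono kD) auto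
      finally show ?thesis .
    qed
    have n3: "norm (D *v Dk) \<le> \<bar>l\<kappa>\<bar> * b * KD"
      using KD[of Dk] mult_right_mono[OF n2, of KD] KDp by linarith
    have "norm (yh (T + s) - yh s) \<le> b * KC + \<bar>l\<kappa>\<bar> * b * KD"
      unfolding e using norm_triangle_ineq[of "C *v Dx" "D *v Dk"] n1 n3 by linarith
    then show ?thesis unfolding d_def by (simp add: mult_ac)
  qed
  define Q where "Q = 2 * M * d + d^2"
  have Q0: "0 \<le> Q" using M0 d0 by (simp add: Q_def)
  have Qr0: "Q = 0" if "r0 = 0" using dr0[OF that] Q_def by simp
  have pw: "(norm (ym s - yh s))^2 \<le> (norm (y (s-T) - yh (s-T)))^2 + Q" if st: "T \<le> s" "s < 2*T" for s
  proof -
    define s' where "s' = s - T"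
    have s': "0 \<le> s'" "s' < T" "s = T + s'" using st unfolding s'_def by auto
    have ym: "ym s = y s'" using ym_def[rule_format, of s] st s'_def by simp
    have A: "norm (y s' - yh s') \<le> M" using yt_bd s' by auto
    have Dd: "norm (yh (T + s') - yh s') \<le> d" using ydiff s' by auto
    have "ym s - yh s = (y s' - yh s') - (yh (T + s') - yh s')" unfolding ym by (simp add: s'(3))
    then have "norm (ym s - yh s) \<le> norm (y s' - yh s') + norm (yh (T + s') - yh s')"
      using norm_triangle_ineq4 by metis
    then have "norm (ym s - yh s) \<le> norm (y s' - yh s') + d" using Dd by linarith
    then have "(norm (ym s - yh s))^2 \<le> (norm (y s' - yh s') + d)^2" by (simp add: power_mono)
    also have "\<dots> = (norm (y s' - yh s'))^2 + 2*norm (y s' - yh s')*d + d^2" by (simp add: power2_sum)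
    also have "\<dots> \<le> (norm (y s' - yh s'))^2 + Q"
      unfolding Q_def using mult_right_mono[OF A d0] by simp
    finally show ?thesis unfolding s'_def by simp
  qed
  have sq_meas: "(\<lambda>s. (norm (h s))^2) \<in> borel_measurable (lebesgue_on S)"
    if "h integrable_on S" for h :: "real \<Rightarrow> real^'p" and S
  proof -
    have "h \<in> borel_measurable (lebesgue_on S)" using integrable_imp_measurable that by blast
    then show ?thesis by measurable
  qed
  have I1: "(\<lambda>s. (norm (y s - yh s))^2) integrable_on {a..b}" if ab: "0 \<le> a" "b \<le> T" for a b
  proof (rule measurable_bounded_by_integrable_imp_integrable_real)
    show "(\<lambda>s. (norm (y s - yh s))^2) \<in> borel_measurable (lebesgue_on {a..b})"
      by (rule sq_meas[OF yt_int]) (use ab T_pos in auto)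
    show "(\<lambda>_. M^2) integrable_on {a..b}" by (rule integrable_const_ivl)
    show "\<bar>(norm (y s - yh s))^2\<bar> \<le> M^2" if "s \<in> {a..b}" for s
      using yt_bd[of s] that ab by (simp add: power_mono)
    show "{a..b} \<in> sets lebesgue" by simp
  qed
  have I3: "(\<lambda>s. (norm (y (s-T) - yh (s-T)))^2) integrable_on {a..b}" if ab: "T \<le> a" "b \<le> 2*T" for a b
    using shift_integrable[of "\<lambda>s. (norm (y s - yh s))^2" a T b] I1[of "a-T" "b-T"] ab by simp
  have I2: "(\<lambda>s. (norm (ym s - yh s))^2) integrable_on {T..b}" if b: "b < 2*T" for b
  proof -
    have yi: "(\<lambda>s. y (s - T)) integrable_on {T..b}"
      using shift_integrable[of y T T b] y_int[of "T-T" "b-T"] T_pos b by simp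
    have yhi: "yh integrable_on {T..b}"
      by (rule integrable_continuous_interval, rule continuous_on_subset[OF yhcont[OF b]]) (use T_pos in auto)
    have "(\<lambda>s. y (s - T) - yh s) integrable_on {T..b}" using yi yhi by (rule integrable_diff)
    then have m: "(\<lambda>s. (norm (y (s - T) - yh s))^2) \<in> borel_measurable (lebesgue_on {T..b})"
      by (rule sq_meas)
    have "(\<lambda>s. (norm (y (s - T) - yh s))^2) integrable_on {T..b}"
    proof (rule measurable_bounded_by_integrable_imp_integrable_real[OF m])
      show "(\<lambda>_. M^2 + Q) integrable_on {T..b}" by (rule integrable_const_ivl)
      show "\<bar>(norm (y (s - T) - yh s))^2\<bar> \<le> M^2 + Q" if "s \<in> {T..b}" for s
      proof -
        have "(norm (ym s - yh s))^2 \<le> (norm (y (s-T) - yh (s-T)))^2 + Q" using pw that b by auto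
        moreover have "(norm (y (s-T) - yh (s-T)))^2 \<le> M^2"
          using yt_bd[of "s-T"] that b by (simp add: power_mono)
        moreover have "ym s = y (s - T)" using ym_def that by auto
        ultimately show ?thesis by simp
      qed
      show "{T..b} \<in> sets lebesgue" by simp
    qed
    moreover have "ym s = y (s - T)" if "s \<in> {T..b}" for s using ym_def that by auto
    ultimately show ?thesis using integrable_cong[of "{T..b}" "\<lambda>s. (norm (ym s - yh s))^2" "\<lambda>s. (norm (y (s - T) - yh s))^2"]
      by simp
  qed
  define c where "c = (if r0 = 0 then 1 else max 1 (Q * exp (2*T) / r0))"
  have cpos: "c > 0" unfolding c_def by (simp add: less_max_iff_disj)
  have Qle: "Q \<le> c * r0 * exp (-t)" if "t < 2*T" for t
  proof (cases "r0 = 0")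
    case True then show ?thesis using Qr0 by simp
  next
    case False
    then have r0p: "r0 > 0" unfolding r0_def by simp
    have "Q = (Q * exp (2*T) / r0) * r0 * exp (-(2*T))" using r0p by (simp add: exp_minus field_simps)
    also have "\<dots> \<le> c * r0 * exp (-(2*T))" unfolding c_def using False r0p by (intro mult_right_mono) auto
    also have "\<dots> \<le> c * r0 * exp (-t)" using that cpos r0p by (intro mult_left_mono) auto
    finally show ?thesis .
  qed
  have case1: "monitor \<sigma> (\<lambda>s. ym s - yh s) t \<le>
        (1/\<sigma>) * integral {t-\<sigma>..T} (\<lambda>s. (norm (y s - yh s))\<^sup>2)
      + (1/\<sigma>) * integral {T..t} (\<lambda>s. (norm (y (s-T) - yh (s-T)))\<^sup>2) + c * r0 * exp (-t)"
    if t: "t \<in> {T..<T+\<sigma>}" for t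
  proof -
    let ?g1 = "\<lambda>s. (norm (ym s - yh s))^2"
    let ?g0 = "\<lambda>s. (norm (y s - yh s))^2"
    let ?g3 = "\<lambda>s. (norm (y (s-T) - yh (s-T)))^2"
    have t2: "t < 2*T" using t \<sigma>_le by auto
    have a0: "0 \<le> t - \<sigma>" using t \<sigma>_le by auto
    have g1a: "?g1 integrable_on {t-\<sigma>..T}"
      by (rule integrable_spike_finite[of "{T}" _ _ ?g0]) (use ym_def I1[OF a0 order_refl] in auto)
    have g1b: "?g1 integrable_on {T..t}" using I2[OF t2] .
    have g1: "?g1 integrable_on {t-\<sigma>..t}"
      by (rule Henstock_Kurzweil_Integration.integrable_combine[OF _ _ g1a g1b]) (use t \<sigma>_pos in auto)
    have split: "integral {t-\<sigma>..t} ?g1 = integral {t-\<sigma>..T} ?g1 + integral {T..t} ?g1"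
      using Henstock_Kurzweil_Integration.integral_combine[of "t-\<sigma>" T t ?g1, OF _ _ g1] t \<sigma>_pos by auto
    have e1: "integral {t-\<sigma>..T} ?g1 = integral {t-\<sigma>..T} ?g0"
      by (rule integral_spike[of "{T}"]) (use ym_def in auto)
    have g3i: "?g3 integrable_on {T..t}" using I3[of T t] t2 by auto
    have le: "integral {T..t} ?g1 \<le> integral {T..t} (\<lambda>s. ?g3 s + Q)"
      by (rule integral_le[OF g1b integrable_add[OF g3i integrable_const_ivl]]) (use pw t2 in auto)
    have e2: "integral {T..t} (\<lambda>s. ?g3 s + Q) = integral {T..t} ?g3 + (t - T) * Q"
      using integral_add[OF g3i integrable_const_ivl, of Q] t by simp
    have "(t - T) * Q \<le> \<sigma> * Q" using t Q0 by (intro mult_right_mono) auto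
    then have "integral {T..t} ?g1 \<le> integral {T..t} ?g3 + \<sigma> * Q" using le e2 by linarith
    then have "(1/\<sigma>) * integral {T..t} ?g1 \<le> (1/\<sigma>) * (integral {T..t} ?g3 + \<sigma> * Q)"
      using \<sigma>_pos by (intro mult_left_mono) auto
    also have "\<dots> = (1/\<sigma>) * integral {T..t} ?g3 + Q" using \<sigma>_pos by (simp add: field_simps)
    finally have f: "(1/\<sigma>) * integral {T..t} ?g1 \<le> (1/\<sigma>) * integral {T..t} ?g3 + Q" .
    have "monitor \<sigma> (\<lambda>s. ym s - yh s) t = (1/\<sigma>) * integral {t-\<sigma>..T} ?g0 + (1/\<sigma>) * integral {T..t} ?g1"
      unfolding monitor_def split e1 by (simp add: ring_distribs)
    then show ?thesis using f Qle[OF t2] by linarith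
  qed
  have case2: "monitor \<sigma> (\<lambda>s. ym s - yh s) t \<le>
        (1/\<sigma>) * integral {t-\<sigma>..t} (\<lambda>s. (norm (y (s-T) - yh (s-T)))\<^sup>2) + c * r0 * exp (-t)"
    if t: "t \<in> {T+\<sigma>..<2*T}" for t
  proof -
    let ?g1 = "\<lambda>s. (norm (ym s - yh s))^2"
    let ?g3 = "\<lambda>s. (norm (y (s-T) - yh (s-T)))^2"
    have t2: "t < 2*T" using t by auto
    have g1: "?g1 integrable_on {t-\<sigma>..t}"
      by (rule integrable_on_subinterval[OF I2[OF t2]]) (use t in auto)
    have g3i: "?g3 integrable_on {t-\<sigma>..t}" using I3[of "t-\<sigma>" t] t by auto
    have le: "integral {t-\<sigma>..t} ?g1 \<le> integral {t-\<sigma>..t} (\<lambda>s. ?g3 s + Q)"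
      by (rule integral_le[OF g1 integrable_add[OF g3i integrable_const_ivl]]) (use pw t2 t in auto)
    have e2: "integral {t-\<sigma>..t} (\<lambda>s. ?g3 s + Q) = integral {t-\<sigma>..t} ?g3 + \<sigma> * Q"
      using integral_add[OF g3i integrable_const_ivl, of Q] \<sigma>_pos by simp
    have "(1/\<sigma>) * integral {t-\<sigma>..t} ?g1 \<le> (1/\<sigma>) * (integral {t-\<sigma>..t} ?g3 + \<sigma> * Q)"
      using \<sigma>_pos le e2 by (intro mult_left_mono) auto
    also have "\<dots> = (1/\<sigma>) * integral {t-\<sigma>..t} ?g3 + Q" using \<sigma>_pos by (simp add: field_simps)
    finally show ?thesis unfolding monitor_def using Qle[OF t2] by linarith
  qed
  show ?thesis
    apply (rule exI[of _ "\<lambda>r t. c * r * exp (-t)"])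
    using KL_lin[OF cpos] case1 case2 unfolding r0_def by auto
qed

end
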